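(* Let $\mathbf{C}$ be a category all of whose morphisms are monomorphisms, enriched over $\mathbf{Top}$ with every homset Hausdorff. Let $\mathbf{D}$ be a full subcategory of $\mathbf{C}$ such that $\hom(A,B)$ is finite for all $A, B \in \mathrm{Ob}(\mathbf{D})$. Let $(X_n, x_n^m)_{n \le m \in \omega}$ be a sequence in $\mathbf{D}$ with a colimit $(S, \sigma_n)_{n \in \omega}$ in $\mathbf{C}$ which is $\omega$-small and such that $S$ is universal for $\mathbf{D}$. Then for every $A \in \mathrm{Ob}(\mathbf{D})$ and every $t \in \mathbb{N}$ the following are equivalent: (1) $t_\mathbf{D}(A) \le t$; (2) $S \longrightarrow_\flat (B)^A_{k,t}$ for all $k \in \mathbb{N}$ and all $B \in \mathrm{Ob}(\mathbf{D})$ with $\hom(A,B) \ne \varnothing$. Consequently, $t_\mathbf{D}(A) \le T_\mathbf{C}(A,S)$ for every $A \in \mathrm{Ob}(\mathbf{D})$.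
   Context: A category is enriched over $\mathbf{Top}$ if each homset is a topological space and composition is continuous. A sequence in $\mathbf{D}$ is a functor $\omega \to \mathbf{D}$, written $(X_n, x_n^m)_{n\le m\in\omega}$ with $x_n^m \in \hom_\mathbf{D}(X_n, X_m)$; its colimit $(S,\sigma_n)_{n\in\omega}$ in $\mathbf{C}$ has canonical morphisms $\sigma_n : X_n \to S$. The colimit is $\omega$-small if for every $A \in \mathrm{Ob}(\mathbf{D})$ and every $f \in \hom_\mathbf{C}(A,S)$ there exist $n \in \omega$ and $g \in \hom_\mathbf{D}(A, X_n)$ with $f = \sigma_n \cdot g$. $S$ is universal for $\mathbf{D}$ if $\hom_\mathbf{C}(D,S) \ne \varnothing$ for every $D \in \mathrm{Ob}(\mathbf{D})$. $t_\mathbf{D}(A)$ (small embedding Ramsey degree) is the least positive integer $n$ such that for all $k \in \mathbb{N}$ and $B \in \mathrm{Ob}(\mathbf{D})$ there is $C \in \mathrm{Ob}(\mathbf{D})$ such that every coloring $\chi : \hom(A,C) \to \{0,\dots,k-1\}$ admits $w \in \hom(B,C)$ with $|\chi(w \cdot \hom(A,B))| \le n$; $\infty$ if none. A Borel $k$-coloring is a map to $\{0,\dots,k-1\}$ with Borel fibers. $S \longrightarrow_\flat (B)^A_{k,t}$ means: for every Borel $k$-coloring $\chi$ of $\hom_\mathbf{C}(A,S)$ there is $w \in \hom(B,S)$ with $|\chi(w \cdot \hom(A,B))| \le t$. $T_\mathbf{C}(A,S)$ is the least positive integer $n$ with $S \longrightarrow_\flat (S)^A_{k,n}$ for all $k \ge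 2$, $\infty$ if none. *)

theory Defs
  imports "HOL-Analysis.Analysis"
begin

text \<open>A category given by an object set, homsets, composition (cmp g f = g after f)
  and identities.\<close>
definition category :: "'o set \<Rightarrow> ('o \<Rightarrow> 'o \<Rightarrow> 'm set) \<Rightarrow> ('m \<Rightarrow> 'm \<Rightarrow> 'm) \<Rightarrow> ('o \<Rightarrow> 'm) \<Rightarrow> bool" where
"category Ob hom cmp ide \<longleftrightarrow>
  (\<forall>A B. hom A B \<noteq> {} \<longrightarrow> A \<in> Ob \<and> B \<in> Ob) \<and>
  (\<forall>A\<in>Ob. \<forall>B\<in>Ob. \<forall>C\<in>Ob. \<forall>f\<in>hom A B. \<forall>g\<in>hom B C. cmp g f \<in> hom A C) \<and>
  (\<forall>A\<in>Ob. \<forall>B\<in>Ob. \<forall>C\<in>Ob. \<forall>E\<in>Ob. \<forall>f\<in>hom A B. \<forall>g\<in>hom B C. \<forall>h\<in>hom C E.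
      cmp h (cmp g f) = cmp (cmp h g) f) \<and>
  (\<forall>A\<in>Ob. ide A \<in> hom A A) \<and>
  (\<forall>A\<in>Ob. \<forall>B\<in>Ob. \<forall>f\<in>hom A B. cmp f (ide A) = f \<and> cmp (ide B) f = f) \<and>
  (\<forall>A B A' B' f. f \<in> hom A B \<and> f \<in> hom A' B' \<longrightarrow> A = A' \<and> B = B')"

definition all_mono :: "'o set \<Rightarrow> ('o \<Rightarrow> 'o \<Rightarrow> 'm set) \<Rightarrow> ('m \<Rightarrow> 'm \<Rightarrow> 'm) \<Rightarrow> bool" where
"all_mono Ob hom cmp \<longleftrightarrow>
  (\<forall>A\<in>Ob. \<forall>B\<in>Ob. \<forall>Z\<in>Ob. \<forall>f\<in>hom A B. \<forall>g\<in>hom Z A. \<forall>h\<in>hom Z A.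
     cmp f g = cmp f h \<longrightarrow> g = h)"

definition top_enriched :: "'o set \<Rightarrow> ('o \<Rightarrow> 'o \<Rightarrow> 'm set) \<Rightarrow> ('m \<Rightarrow> 'm \<Rightarrow> 'm) \<Rightarrow> ('o \<Rightarrow> 'o \<Rightarrow> 'm topology) \<Rightarrow> bool" where
"top_enriched Ob hom cmp T \<longleftrightarrow>
  (\<forall>A\<in>Ob. \<forall>B\<in>Ob. topspace (T A B) = hom A B) \<and>
  (\<forall>A\<in>Ob. \<forall>B\<in>Ob. \<forall>C\<in>Ob.
     continuous_map (prod_topology (T A B) (T B C)) (T A C) (\<lambda>(f, g). cmp g f))"

definition is_sequence :: "'o set \<Rightarrow> ('o \<Rightarrow> 'o \<Rightarrow> 'm set) \<Rightarrow> ('m \<Rightarrow> 'm \<Rightarrow> 'm) \<Rightarrow> ('o \<Rightarrow> 'm)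
    \<Rightarrow> (nat \<Rightarrow> 'o) \<Rightarrow> (nat \<Rightarrow> nat \<Rightarrow> 'm) \<Rightarrow> bool" where
"is_sequence ObD hom cmp ide X x \<longleftrightarrow>
  (\<forall>n. X n \<in> ObD) \<and>
  (\<forall>n m. n \<le> m \<longrightarrow> x n m \<in> hom (X n) (X m)) \<and>
  (\<forall>n. x n n = ide (X n)) \<and>
  (\<forall>n m l. n \<le> m \<longrightarrow> m \<le> l \<longrightarrow> cmp (x m l) (x n m) = x n l)"

definition is_colimit :: "'o set \<Rightarrow> ('o \<Rightarrow> 'o \<Rightarrow> 'm set) \<Rightarrow> ('m \<Rightarrow> 'm \<Rightarrow> 'm)
    \<Rightarrow> (nat \<Rightarrow> 'o) \<Rightarrow> (nat \<Rightarrow> nat \<Rightarrow> 'm) \<Rightarrow> 'o \<Rightarrow> (nat \<Rightarrow> 'm) \<Rightarrow> bool" where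
"is_colimit Ob hom cmp X x S \<sigma> \<longleftrightarrow>
  S \<in> Ob \<and>
  (\<forall>n. \<sigma> n \<in> hom (X n) S) \<and>
  (\<forall>n m. n \<le> m \<longrightarrow> cmp (\<sigma> m) (x n m) = \<sigma> n) \<and>
  (\<forall>Y\<in>Ob. \<forall>\<tau>. (\<forall>n. \<tau> n \<in> hom (X n) Y) \<and> (\<forall>n m. n \<le> m \<longrightarrow> cmp (\<tau> m) (x n m) = \<tau> n)
     \<longrightarrow> (\<exists>!u. u \<in> hom S Y \<and> (\<forall>n. cmp u (\<sigma> n) = \<tau> n)))"

definition omega_small :: "'o set \<Rightarrow> ('o \<Rightarrow> 'o \<Rightarrow> 'm set) \<Rightarrow> ('m \<Rightarrow> 'm \<Rightarrow> 'm)
    \<Rightarrow> (nat \<Rightarrow> 'o) \<Rightarrow> 'o \<Rightarrow> (nat \<Rightarrow> 'm) \<Rightarrow> bool" where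
"omega_small ObD hom cmp X S \<sigma> \<longleftrightarrow>
  (\<forall>A\<in>ObD. \<forall>f\<in>hom A S. \<exists>n. \<exists>g\<in>hom A (X n). f = cmp (\<sigma> n) g)"

definition universal_for :: "'o set \<Rightarrow> ('o \<Rightarrow> 'o \<Rightarrow> 'm set) \<Rightarrow> 'o \<Rightarrow> bool" where
"universal_for ObD hom S \<longleftrightarrow> (\<forall>D\<in>ObD. hom D S \<noteq> {})"

definition small_ramsey_prop :: "'o set \<Rightarrow> ('o \<Rightarrow> 'o \<Rightarrow> 'm set) \<Rightarrow> ('m \<Rightarrow> 'm \<Rightarrow> 'm) \<Rightarrow> 'o \<Rightarrow> nat \<Rightarrow> bool" where
"small_ramsey_prop ObD hom cmp A n \<longleftrightarrow>
  (\<forall>k::nat. \<forall>B\<in>ObD. \<exists>C\<in>ObD. \<forall>col::'m \<Rightarrow> nat. col ` hom A C \<subseteq> {..<k} \<longrightarrow>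
     (\<exists>w\<in>hom B C. card (col ` (\<lambda>f. cmp w f) ` hom A B) \<le> n))"

definition small_ramsey_degree :: "'o set \<Rightarrow> ('o \<Rightarrow> 'o \<Rightarrow> 'm set) \<Rightarrow> ('m \<Rightarrow> 'm \<Rightarrow> 'm) \<Rightarrow> 'o \<Rightarrow> enat" where
"small_ramsey_degree ObD hom cmp A =
  (if \<exists>n>0. small_ramsey_prop ObD hom cmp A n
   then enat (LEAST n. n > 0 \<and> small_ramsey_prop ObD hom cmp A n) else \<infinity>)"

definition borel_coloring :: "'m topology \<Rightarrow> nat \<Rightarrow> ('m \<Rightarrow> nat) \<Rightarrow> bool" where
"borel_coloring T k col \<longleftrightarrow>
  col ` topspace T \<subseteq> {..<k} \<and>
  (\<forall>i<k. {f \<in> topspace T. col f = i} \<in> sigma_sets (topspace T) {U. openin T U})"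

definition borel_arrow :: "('o \<Rightarrow> 'o \<Rightarrow> 'm set) \<Rightarrow> ('m \<Rightarrow> 'm \<Rightarrow> 'm) \<Rightarrow> ('o \<Rightarrow> 'o \<Rightarrow> 'm topology)
    \<Rightarrow> 'o \<Rightarrow> 'o \<Rightarrow> 'o \<Rightarrow> nat \<Rightarrow> nat \<Rightarrow> bool" where
"borel_arrow hom cmp T S B A k t \<longleftrightarrow>
  (\<forall>col. borel_coloring (T A S) k col \<longrightarrow>
     (\<exists>w\<in>hom B S. card (col ` (\<lambda>f. cmp w f) ` hom A B) \<le> t))"

definition big_ramsey_degree :: "('o \<Rightarrow> 'o \<Rightarrow> 'm set) \<Rightarrow> ('m \<Rightarrow> 'm \<Rightarrow> 'm) \<Rightarrow> ('o \<Rightarrow> 'o \<Rightarrow> 'm topology)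
    \<Rightarrow> 'o \<Rightarrow> 'o \<Rightarrow> enat" where
"big_ramsey_degree hom cmp T A S =
  (if \<exists>n>0. \<forall>k\<ge>2. borel_arrow hom cmp T S S A k n
   then enat (LEAST n. n > 0 \<and> (\<forall>k\<ge>2. borel_arrow hom cmp T S S A k n)) else \<infinity>)"

end

theory Submission
  imports Defs
begin

locale cset =
  fixes Ob ObD :: "'o set" and hom :: "'o \<Rightarrow> 'o \<Rightarrow> 'm set" and cmp :: "'m \<Rightarrow> 'm \<Rightarrow> 'm"
    and ide :: "'o \<Rightarrow> 'm" and T :: "'o \<Rightarrow> 'o \<Rightarrow> 'm topology"
    and X :: "nat \<Rightarrow> 'o" and x :: "nat \<Rightarrow> nat \<Rightarrow> 'm" and S :: 'o and \<sigma> :: "nat \<Rightarrow> 'm"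
  assumes cat: "category Ob hom cmp ide"
    and mono: "all_mono Ob hom cmp"
    and enr: "top_enriched Ob hom cmp T"
    and haus: "\<forall>A\<in>Ob. \<forall>B\<in>Ob. Hausdorff_space (T A B)"
    and sub: "ObD \<subseteq> Ob"
    and fin: "\<forall>A\<in>ObD. \<forall>B\<in>ObD. finite (hom A B)"
    and seq: "is_sequence ObD hom cmp ide X x"
    and colim: "is_colimit Ob hom cmp X x S \<sigma>"
    and small: "omega_small ObD hom cmp X S \<sigma>"
    and univ: "universal_for ObD hom S"
begin

lemma obs: assumes f: "f \<in> hom A B" shows "A \<in> Ob \<and> B \<in> Ob"
proof -
  have "\<forall>A B. hom A B \<noteq> {} \<longrightarrow> A \<in> Ob \<and> B \<in> Ob" using cat unfolding category_def by simp
  moreover have "hom A B \<noteq> {}" using f by blast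
  ultimately show ?thesis by blast
qed

lemma comp: assumes f: "f \<in> hom A B" and g: "g \<in> hom B C" shows "cmp g f \<in> hom A C"
proof -
  have "A \<in> Ob" "B \<in> Ob" "C \<in> Ob" using obs[OF f] obs[OF g] by auto
  moreover have "\<forall>A\<in>Ob. \<forall>B\<in>Ob. \<forall>C\<in>Ob. \<forall>f\<in>hom A B. \<forall>g\<in>hom B C. cmp g f \<in> hom A C"
    using cat unfolding category_def by simp
  ultimately show ?thesis using f g by blast
qed

lemma assoc: assumes f: "f \<in> hom A B" and g: "g \<in> hom B C" and h: "h \<in> hom C E"
  shows "cmp h (cmp g f) = cmp (cmp h g) f"
proof -
  have "A \<in> Ob" "B \<in> Ob" "C \<in> Ob" "E \<in> Ob" using obs[OF f] obs[OF g] obs[OF h] by auto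
  moreover have "\<forall>A\<in>Ob. \<forall>B\<in>Ob. \<forall>C\<in>Ob. \<forall>E\<in>Ob. \<forall>f\<in>hom A B. \<forall>g\<in>hom B C. \<forall>h\<in>hom C E.
      cmp h (cmp g f) = cmp (cmp h g) f" using cat unfolding category_def by simp
  ultimately show ?thesis using f g h by blast
qed

lemma ide_hom: "A \<in> Ob \<Longrightarrow> ide A \<in> hom A A"
  using cat unfolding category_def by blast

lemma ide_l: assumes f: "f \<in> hom A B" shows "cmp (ide B) f = f"
proof -
  have "A \<in> Ob" "B \<in> Ob" using obs[OF f] by auto
  moreover have "\<forall>A\<in>Ob. \<forall>B\<in>Ob. \<forall>f\<in>hom A B. cmp f (ide A) = f \<and> cmp (ide B) f = f"
    using cat unfolding category_def by simp
  ultimately show ?thesis using f by blast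
qed

lemma monoc: "f \<in> hom A B \<Longrightarrow> g \<in> hom Z A \<Longrightarrow> h \<in> hom Z A \<Longrightarrow> cmp f g = cmp f h \<Longrightarrow> g = h"
  using mono obs unfolding all_mono_def by meson

lemma XD: "X n \<in> ObD" using seq unfolding is_sequence_def by blast
lemma xhom: "n \<le> m \<Longrightarrow> x n m \<in> hom (X n) (X m)" using seq unfolding is_sequence_def by blast
lemma xnn: "x n n = ide (X n)" using seq unfolding is_sequence_def by blast
lemma xcomp: "n \<le> m \<Longrightarrow> m \<le> l \<Longrightarrow> cmp (x m l) (x n m) = x n l" using seq unfolding is_sequence_def by blast
lemma shom: "\<sigma> n \<in> hom (X n) S" using colim unfolding is_colimit_def by blast
lemma sx: "n \<le> m \<Longrightarrow> cmp (\<sigma> m) (x n m) = \<sigma> n" using colim unfolding is_colimit_def by blast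
lemma smallD: "A \<in> ObD \<Longrightarrow> f \<in> hom A S \<Longrightarrow> \<exists>n g. g \<in> hom A (X n) \<and> f = cmp (\<sigma> n) g"
  using small unfolding omega_small_def by blast
lemma univD: "D \<in> ObD \<Longrightarrow> \<exists>u. u \<in> hom D S" using univ unfolding universal_for_def by blast
lemma topsp: "A \<in> Ob \<Longrightarrow> B \<in> Ob \<Longrightarrow> topspace (T A B) = hom A B"
  using enr unfolding top_enriched_def by blast

lemma borel_all:
  assumes A: "A \<in> ObD" and Y: "Y \<subseteq> hom A S"
  shows "Y \<in> sigma_sets (hom A S) {U. openin (T A S) U}"
proof -
  have "hom A S \<subseteq> (\<Union>n. (\<lambda>g. cmp (\<sigma> n) g) ` hom A (X n))"
    using smallD[OF A] by blast
  moreover have "countable (\<Union>n. (\<lambda>g. cmp (\<sigma> n) g) ` hom A (X n))"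
    using fin A XD by (intro countable_UN) (auto intro: countable_finite)
  ultimately have cY: "countable Y" using Y countable_subset by blast
  have AO: "A \<in> Ob" and SO: "S \<in> Ob" using A sub colim unfolding is_colimit_def by auto
  have t1: "t1_space (T A S)" using haus AO SO Hausdorff_imp_t1_space by blast
  have sing: "{y} \<in> sigma_sets (hom A S) {U. openin (T A S) U}" if "y \<in> Y" for y
  proof -
    have yt: "y \<in> topspace (T A S)" using that Y topsp[OF AO SO] by auto
    have "closedin (T A S) {y}" using closedin_t1_singleton[OF t1 yt] .
    hence op: "openin (T A S) (hom A S - {y})" using topsp[OF AO SO] closedin_def by metis
    have "hom A S - (hom A S - {y}) \<in> sigma_sets (hom A S) {U. openin (T A S) U}"
      by (rule sigma_sets.Compl) (rule sigma_sets.Basic, use op in simp)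
    moreover have "hom A S - (hom A S - {y}) = {y}" using yt topsp[OF AO SO] by auto
    ultimately show ?thesis by simp
  qed
  have "\<Union> ((\<lambda>y. {y}) ` Y) \<in> sigma_sets (hom A S) {U. openin (T A S) U}"
    using cY sing by (intro sigma_sets_UNION) auto
  thus ?thesis by simp
qed

lemma hard:
  assumes A: "A \<in> ObD" and B: "B \<in> ObD" and arrow: "borel_arrow hom cmp T S B A k t"
  shows "\<exists>C\<in>ObD. \<forall>col::'m \<Rightarrow> nat. col ` hom A C \<subseteq> {..<k} \<longrightarrow>
     (\<exists>w\<in>hom B C. card (col ` (\<lambda>f. cmp w f) ` hom A B) \<le> t)"
proof (rule ccontr)
  assume "\<not> ?thesis"
  hence badex: "\<forall>n. \<exists>col::'m\<Rightarrow>nat. col ` hom A (X n) \<subseteq> {..<k} \<and>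
      (\<forall>w\<in>hom B (X n). t < card (col ` (\<lambda>f. cmp w f) ` hom A B))"
    using XD by (metis not_le)
  define P where "P n = PiE (hom A (X n)) (\<lambda>_. {..<k::nat})" for n
  define Bad where "Bad n = {c \<in> P n. \<forall>w\<in>hom B (X n). t < card (c ` (\<lambda>f. cmp w f) ` hom A B)}" for n
  define R where "R n m c = (\<lambda>g\<in>hom A (X n). c (cmp (x n m) g))" for n m and c :: "'m \<Rightarrow> nat"
  have imgeq: "c ` (\<lambda>f. cmp w f) ` hom A B = c' ` (\<lambda>f. cmp w f) ` hom A B"
    if "w \<in> hom B C" "\<forall>g\<in>hom A C. c g = c' g" for c c' :: "'m \<Rightarrow> nat" and w C
    using that comp by (force simp: image_iff)
  have Bad_ne: "Bad n \<noteq> {}" for n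
  proof -
    obtain col where c1: "col ` hom A (X n) \<subseteq> {..<k}"
      and c2: "\<forall>w\<in>hom B (X n). t < card (col ` (\<lambda>f. cmp w f) ` hom A B)"
      using badex by blast
    have "restrict col (hom A (X n)) \<in> Bad n"
      unfolding Bad_def P_def using c1 c2 imgeq[of _ "X n" "restrict col (hom A (X n))" col]
      by (auto simp: restrict_PiE_iff)
    thus ?thesis by blast
  qed
  have finP: "finite (P n)" for n
    unfolding P_def using fin A XD by (intro finite_PiE) auto
  have RP: "R n m c \<in> P n" if "n \<le> m" "c \<in> P m" for n m c
    unfolding R_def P_def using that comp[OF _ xhom] unfolding P_def by (auto simp: restrict_PiE_iff)
  have RBad: "R n m c \<in> Bad n" if nm: "n \<le> m" and c: "c \<in> Bad m" for n m c
  proof -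
    have "t < card (R n m c ` (\<lambda>f. cmp w f) ` hom A B)" if w: "w \<in> hom B (X n)" for w
    proof -
      have w': "cmp (x n m) w \<in> hom B (X m)" using comp[OF w xhom[OF nm]] .
      have "R n m c ` (\<lambda>f. cmp w f) ` hom A B = c ` (\<lambda>f. cmp (cmp (x n m) w) f) ` hom A B"
      proof -
        have "R n m c (cmp w f) = c (cmp (cmp (x n m) w) f)" if f: "f \<in> hom A B" for f
          using comp[OF f w] assoc[OF f w xhom[OF nm]] unfolding R_def by simp
        thus ?thesis by (force simp: image_iff)
      qed
      thus ?thesis using c w' unfolding Bad_def by simp
    qed
    thus ?thesis using RP[OF nm] c unfolding Bad_def by auto
  qed
  have RR: "R n m (R m l c) = R n l c" if "n \<le> m" "m \<le> l" for n m l c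
  proof
    fix g show "R n m (R m l c) g = R n l c g"
    proof (cases "g \<in> hom A (X n)")
      case True
      have "cmp (x n m) g \<in> hom A (X m)" using comp[OF True xhom] that by simp
      moreover have "cmp (x m l) (cmp (x n m) g) = cmp (x n l) g"
        using assoc[OF True xhom xhom] that xcomp by simp
      ultimately show ?thesis using True unfolding R_def by simp
    qed (simp add: R_def)
  qed
  have Rnn: "R n n c = c" if "c \<in> P n" for n c
  proof
    fix g show "R n n c g = c g"
    proof (cases "g \<in> hom A (X n)")
      case True thus ?thesis using ide_l[OF True] xnn unfolding R_def by simp
    next
      case False thus ?thesis using that unfolding R_def P_def by (auto simp: PiE_def extensional_def)
    qed
  qed
  define E where "E n m = R n m ` Bad m" for n m
  have E_ne: "E n m \<noteq> {}" for n m using Bad_ne unfolding E_def by blast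
  have E_P: "n \<le> m \<Longrightarrow> E n m \<subseteq> P n" for n m using RP unfolding E_def Bad_def by blast
  have E_fin: "n \<le> m \<Longrightarrow> finite (E n m)" for n m using E_P finP finite_subset by metis
  have E_mono: "E n m' \<subseteq> E n m" if "n \<le> m" "m \<le> m'" for n m m'
  proof
    fix c assume "c \<in> E n m'"
    then obtain d where d: "d \<in> Bad m'" "c = R n m' d" unfolding E_def by blast
    hence "c = R n m (R m m' d)" using RR that by simp
    moreover have "R m m' d \<in> Bad m" using RBad that d by simp
    ultimately show "c \<in> E n m" unfolding E_def by blast
  qed
  define G where "G n = {c. \<forall>m\<ge>n. c \<in> E n m}" for n
  have stab: "\<exists>M\<ge>n. \<forall>m\<ge>M. E n m = G n" for n
  proof -
    obtain M where M: "M \<ge> n" "\<forall>y. y \<ge> n \<longrightarrow> card (E n M) \<le> card (E n y)"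
      using ex_has_least_nat[of "\<lambda>M. M \<ge> n" n "\<lambda>M. card (E n M)"] by auto
    have eq: "E n m = E n M" if "m \<ge> M" for m
    proof -
      have "card (E n M) \<le> card (E n m)" using M that by simp
      moreover have "card (E n m) \<le> card (E n M)"
        using card_mono[OF E_fin[OF M(1)] E_mono[OF M(1) that]] .
      ultimately show ?thesis using card_subset_eq[OF E_fin[OF M(1)] E_mono[OF M(1) that]] by simp
    qed
    have "G n = E n M"
    proof
      show "G n \<subseteq> E n M" using M unfolding G_def by blast
      show "E n M \<subseteq> G n" unfolding G_def
      proof (intro subsetI CollectI allI impI)
        fix c m assume c: "c \<in> E n M" and m: "n \<le> m"
        show "c \<in> E n m"
        proof (cases "m \<le> M")
          case True thus ?thesis using E_mono[OF m True] c by blast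
        next
          case False hence Mm: "M \<le> m" by simp
          show ?thesis by (subst eq[OF Mm]) (rule c)
        qed
      qed
    qed
    hence "\<forall>m\<ge>M. E n m = G n"
    proof (intro allI impI)
      fix m assume GE: "G n = E n M" and Mm: "M \<le> m"
      have "E n m = E n M" using eq[OF Mm] .
      thus "E n m = G n" using GE by simp
    qed
    thus ?thesis using M(1) by blast
  qed
  have G_ne: "G n \<noteq> {}" for n using stab[of n] E_ne by force
  have G_ext: "\<exists>c'. c' \<in> G (Suc n) \<and> R n (Suc n) c' = c" if c: "c \<in> G n" for n c
  proof -
    obtain M where M: "M \<ge> Suc n" "\<forall>m\<ge>M. E (Suc n) m = G (Suc n)" using stab by blast
    have "c \<in> E n M" using c M unfolding G_def by simp
    then obtain d where d: "d \<in> Bad M" "c = R n M d" unfolding E_def by blast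
    have "R (Suc n) M d \<in> G (Suc n)" using M d unfolding E_def by blast
    moreover have "R n (Suc n) (R (Suc n) M d) = c" using RR M d by simp
    ultimately show ?thesis by blast
  qed
  define F where "F = rec_nat (SOME c. c \<in> G 0) (\<lambda>n c. SOME c'. c' \<in> G (Suc n) \<and> R n (Suc n) c' = c)"
  have F0: "F 0 = (SOME c. c \<in> G 0)" unfolding F_def by simp
  have FS: "F (Suc n) = (SOME c'. c' \<in> G (Suc n) \<and> R n (Suc n) c' = F n)" for n unfolding F_def by simp
  have FG: "F n \<in> G n" for n
  proof (induction n)
    case 0 thus ?case using F0 G_ne some_in_eq by metis
  next
    case (Suc n) thus ?case using FS G_ext someI_ex[OF G_ext[OF Suc]] by simp
  qed
  have Fstep: "R n (Suc n) (F (Suc n)) = F n" for n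
    using FS someI_ex[OF G_ext[OF FG[of n]]] by simp
  have FP: "F n \<in> P n" for n using FG E_P unfolding G_def by blast
  have Fcoh: "n \<le> m \<Longrightarrow> R n m (F m) = F n" for n m
  proof (induction m rule: dec_induct)
    case base thus ?case using Rnn FP by simp
  next
    case (step m)
    have "R n (Suc m) (F (Suc m)) = R n m (R m (Suc m) (F (Suc m)))" using RR step by simp
    thus ?case using Fstep step by simp
  qed
  have FBad: "F n \<in> Bad n" for n
  proof -
    have "F n \<in> E n n" using FG unfolding G_def by blast
    then obtain d where "d \<in> Bad n" "F n = R n n d" unfolding E_def by blast
    thus ?thesis using Rnn unfolding Bad_def by auto
  qed
  have AO: "A \<in> Ob" and SO: "S \<in> Ob" using A sub colim unfolding is_colimit_def by auto
  have wd1: "F n g = F m g'" if nm: "n \<le> m" and g: "g \<in> hom A (X n)" and g': "g' \<in> hom A (X m)"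
    and eq: "cmp (\<sigma> n) g = cmp (\<sigma> m) g'" for n m g g'
  proof -
    have "cmp (\<sigma> m) (cmp (x n m) g) = cmp (\<sigma> n) g"
      using assoc[OF g xhom[OF nm] shom] sx[OF nm] by simp
    hence "cmp (x n m) g = g'" using monoc[OF shom comp[OF g xhom[OF nm]] g'] eq by simp
    hence "F m g' = R n m (F m) g" using g unfolding R_def by simp
    thus ?thesis using Fcoh[OF nm] by simp
  qed
  have wd: "F n g = F m g'" if "g \<in> hom A (X n)" "g' \<in> hom A (X m)" "cmp (\<sigma> n) g = cmp (\<sigma> m) g'" for n m g g'
    using wd1 that by (metis nle_le)
  define chi where "chi f = (SOME i. \<exists>n. \<exists>g\<in>hom A (X n). f = cmp (\<sigma> n) g \<and> i = F n g)" for f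
  have chi: "chi (cmp (\<sigma> n) g) = F n g" if g: "g \<in> hom A (X n)" for n g
  proof -
    have "\<exists>i. \<exists>n'. \<exists>g'\<in>hom A (X n'). cmp (\<sigma> n) g = cmp (\<sigma> n') g' \<and> i = F n' g'" using g by blast
    from someI_ex[OF this] obtain n' g' where "g' \<in> hom A (X n')" "cmp (\<sigma> n) g = cmp (\<sigma> n') g'"
      "chi (cmp (\<sigma> n) g) = F n' g'" unfolding chi_def by blast
    thus ?thesis using wd g by metis
  qed
  have chi_range: "chi ` hom A S \<subseteq> {..<k}"
  proof
    fix i assume "i \<in> chi ` hom A S"
    then obtain f where f: "f \<in> hom A S" "i = chi f" by blast
    then obtain n g where "g \<in> hom A (X n)" "f = cmp (\<sigma> n) g" using smallD[OF A] by blast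
    thus "i \<in> {..<k}" using f chi FP[of n] unfolding P_def by (auto simp: PiE_iff)
  qed
  have "borel_coloring (T A S) k chi"
    unfolding borel_coloring_def topsp[OF AO SO] using chi_range borel_all[OF A] by auto
  then obtain w where w: "w \<in> hom B S" and card: "card (chi ` (\<lambda>f. cmp w f) ` hom A B) \<le> t"
    using arrow unfolding borel_arrow_def by blast
  obtain n v where v: "v \<in> hom B (X n)" and wv: "w = cmp (\<sigma> n) v" using smallD[OF B w] by blast
  have "chi (cmp w f) = F n (cmp v f)" if f: "f \<in> hom A B" for f
    using assoc[OF f v shom] chi[OF comp[OF f v]] wv by simp
  hence "chi ` (\<lambda>f. cmp w f) ` hom A B = F n ` (\<lambda>f. cmp v f) ` hom A B" by (force simp: image_iff)
  thus False using card FBad[of n] v unfolding Bad_def by auto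
qed

end

lemma srd_le: "small_ramsey_degree ObD hom cmp A \<le> enat t \<longleftrightarrow>
   (\<exists>n>0. n \<le> t \<and> small_ramsey_prop ObD hom cmp A n)"
proof
  assume h: "small_ramsey_degree ObD hom cmp A \<le> enat t"
  then have ex: "\<exists>n>0. small_ramsey_prop ObD hom cmp A n"
    unfolding small_ramsey_degree_def by (auto split: if_splits)
  let ?L = "LEAST n. n > 0 \<and> small_ramsey_prop ObD hom cmp A n"
  have "?L > 0 \<and> small_ramsey_prop ObD hom cmp A ?L" using ex by (metis (mono_tags, lifting) LeastI)
  moreover have "?L \<le> t" using h ex unfolding small_ramsey_degree_def by simp
  ultimately show "\<exists>n>0. n \<le> t \<and> small_ramsey_prop ObD hom cmp A n" by blast
next
  assume "\<exists>n>0. n \<le> t \<and> small_ramsey_prop ObD hom cmp A n"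
  then obtain n where n: "n > 0" "n \<le> t" "small_ramsey_prop ObD hom cmp A n" by blast
  hence "(LEAST n. n > 0 \<and> small_ramsey_prop ObD hom cmp A n) \<le> n" by (intro Least_le) simp
  thus "small_ramsey_degree ObD hom cmp A \<le> enat t" using n unfolding small_ramsey_degree_def by auto
qed

theorem corollary5p2:
  fixes Ob ObD :: "'o set" and hom :: "'o \<Rightarrow> 'o \<Rightarrow> 'm set" and cmp :: "'m \<Rightarrow> 'm \<Rightarrow> 'm"
    and ide :: "'o \<Rightarrow> 'm" and T :: "'o \<Rightarrow> 'o \<Rightarrow> 'm topology"
    and X :: "nat \<Rightarrow> 'o" and x :: "nat \<Rightarrow> nat \<Rightarrow> 'm" and S :: 'o and \<sigma> :: "nat \<Rightarrow> 'm"
  assumes cat: "category Ob hom cmp ide"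
    and mono: "all_mono Ob hom cmp"
    and enr: "top_enriched Ob hom cmp T"
    and haus: "\<forall>A\<in>Ob. \<forall>B\<in>Ob. Hausdorff_space (T A B)"
    and sub: "ObD \<subseteq> Ob"
    and fin: "\<forall>A\<in>ObD. \<forall>B\<in>ObD. finite (hom A B)"
    and seq: "is_sequence ObD hom cmp ide X x"
    and colim: "is_colimit Ob hom cmp X x S \<sigma>"
    and small: "omega_small ObD hom cmp X S \<sigma>"
    and univ: "universal_for ObD hom S"
  shows "(\<forall>A\<in>ObD. \<forall>t::nat.
            small_ramsey_degree ObD hom cmp A \<le> enat t \<longleftrightarrow>
            (\<forall>k::nat. \<forall>B\<in>ObD. hom A B \<noteq> {} \<longrightarrow> borel_arrow hom cmp T S B A k t))
       \<and> (\<forall>A\<in>ObD. small_ramsey_degree ObD hom cmp A \<le> big_ramsey_degree hom cmp T A S)"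
proof -
  interpret c: cset Ob ObD hom cmp ide T X x S \<sigma>
    unfolding cset_def using assms by blast
  have SO: "S \<in> Ob" using colim unfolding is_colimit_def by blast
  have dir2: "small_ramsey_degree ObD hom cmp A \<le> enat t"
    if A: "A \<in> ObD" and h: "\<forall>k::nat. \<forall>B\<in>ObD. hom A B \<noteq> {} \<longrightarrow> borel_arrow hom cmp T S B A k t" for A t
  proof -
    have AO: "A \<in> Ob" using A sub by blast
    have idA: "ide A \<in> hom A A" using c.ide_hom[OF AO] .
    have tpos: "t > 0"
    proof (rule ccontr)
      assume "\<not> t > 0" hence t0: "t = 0" by simp
      have fib: "{f \<in> hom A S. (0::nat) = i} \<in> sigma_sets (hom A S) {U. openin (T A S) U}" for i
        by (rule c.borel_all[OF A]) blast
      have bc: "borel_coloring (T A S) 1 (\<lambda>_::'m. 0::nat)"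
        unfolding borel_coloring_def c.topsp[OF AO SO] using fib by blast
      have ba: "borel_arrow hom cmp T S A A 1 t" using h A idA by blast
      obtain w where w: "w \<in> hom A S" and cw: "card ((\<lambda>_::'m. 0::nat) ` (\<lambda>f. cmp w f) ` hom A A) \<le> t"
        using ba bc unfolding borel_arrow_def by blast
      have finA: "finite (hom A A)" using fin A by blast
      have "(0::nat) \<in> (\<lambda>_::'m. 0::nat) ` (\<lambda>f. cmp w f) ` hom A A"
        using imageI[OF imageI[OF idA, of "\<lambda>f. cmp w f"], of "\<lambda>_::'m. 0::nat"] by simp
      moreover have "finite ((\<lambda>_::'m. 0::nat) ` (\<lambda>f. cmp w f) ` hom A A)" using finA by simp
      ultimately have "card ((\<lambda>_::'m. 0::nat) ` (\<lambda>f. cmp w f) ` hom A A) > 0"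
        using card_gt_0_iff by blast
      thus False using cw t0 by simp
    qed
    have "small_ramsey_prop ObD hom cmp A t"
      unfolding small_ramsey_prop_def
    proof (intro allI ballI)
      fix k :: nat and B assume B: "B \<in> ObD"
      show "\<exists>C\<in>ObD. \<forall>col::'m \<Rightarrow> nat. col ` hom A C \<subseteq> {..<k} \<longrightarrow>
          (\<exists>w\<in>hom B C. card (col ` (\<lambda>f. cmp w f) ` hom A B) \<le> t)"
      proof (cases "hom A B = {}")
        case True
        have iB: "ide B \<in> hom B B" using c.ide_hom B sub by blast
        have "card ((col::'m \<Rightarrow> nat) ` (\<lambda>f. cmp (ide B) f) ` hom A B) \<le> t" for col using True by simp
        thus ?thesis using iB B by blast
      next
        case False
        hence "borel_arrow hom cmp T S B A k t" using h B by blast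
        thus ?thesis by (rule c.hard[OF A B])
      qed
    qed
    hence "\<exists>n>0. n \<le> t \<and> small_ramsey_prop ObD hom cmp A n" using tpos by blast
    thus ?thesis by (rule srd_le[THEN iffD2])
  qed
  have dir1: "borel_arrow hom cmp T S B A k t"
    if A: "A \<in> ObD" and le: "small_ramsey_degree ObD hom cmp A \<le> enat t" and B: "B \<in> ObD" for A t k B
  proof -
    have AO: "A \<in> Ob" using A sub by blast
    obtain n where n: "n \<le> t" "small_ramsey_prop ObD hom cmp A n" using srd_le[THEN iffD1, OF le] by blast
    obtain C where C: "C \<in> ObD" and CR: "\<forall>col::'m \<Rightarrow> nat. col ` hom A C \<subseteq> {..<k} \<longrightarrow>
          (\<exists>w\<in>hom B C. card (col ` (\<lambda>f. cmp w f) ` hom A B) \<le> n)"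
      using n(2) B unfolding small_ramsey_prop_def by blast
    obtain u where u: "u \<in> hom C S" using c.univD[OF C] by blast
    show ?thesis unfolding borel_arrow_def
    proof (intro allI impI)
      fix col assume bc: "borel_coloring (T A S) k col"
      hence cr: "col ` hom A S \<subseteq> {..<k}" unfolding borel_coloring_def c.topsp[OF AO SO] by (rule conjunct1)
      have "(\<lambda>g. col (cmp u g)) ` hom A C \<subseteq> {..<k}" using cr c.comp[OF _ u] by blast
      then obtain w where w: "w \<in> hom B C" and cw: "card ((\<lambda>g. col (cmp u g)) ` (\<lambda>f. cmp w f) ` hom A B) \<le> n"
        using CR by blast
      have EQ: "(\<lambda>g. col (cmp u g)) ` (\<lambda>f. cmp w f) ` hom A B = col ` (\<lambda>f. cmp (cmp u w) f) ` hom A B"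
      proof -
        have pw: "col (cmp u (cmp w f)) = col (cmp (cmp u w) f)" if "f \<in> hom A B" for f
          using c.assoc[OF that w u] by simp
        show ?thesis unfolding image_image by (rule image_cong[OF refl pw])
      qed
      have "card (col ` (\<lambda>f. cmp (cmp u w) f) ` hom A B) \<le> n" using cw unfolding EQ .
      hence "card (col ` (\<lambda>f. cmp (cmp u w) f) ` hom A B) \<le> t" using n(1) by linarith
      thus "\<exists>w\<in>hom B S. card (col ` (\<lambda>f. cmp w f) ` hom A B) \<le> t"
        using c.comp[OF w u] by blast
    qed
  qed
  have part1: "\<forall>A\<in>ObD. \<forall>t::nat.
            small_ramsey_degree ObD hom cmp A \<le> enat t \<longleftrightarrow>
            (\<forall>k::nat. \<forall>B\<in>ObD. hom A B \<noteq> {} \<longrightarrow> borel_arrow hom cmp T S B A k t)"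
  proof (intro ballI allI)
    fix A t assume A: "A \<in> ObD"
    show "small_ramsey_degree ObD hom cmp A \<le> enat t \<longleftrightarrow>
      (\<forall>k::nat. \<forall>B\<in>ObD. hom A B \<noteq> {} \<longrightarrow> borel_arrow hom cmp T S B A k t)"
    proof
      assume "small_ramsey_degree ObD hom cmp A \<le> enat t"
      thus "\<forall>k::nat. \<forall>B\<in>ObD. hom A B \<noteq> {} \<longrightarrow> borel_arrow hom cmp T S B A k t"
        using dir1[OF A] by blast
    next
      assume "\<forall>k::nat. \<forall>B\<in>ObD. hom A B \<noteq> {} \<longrightarrow> borel_arrow hom cmp T S B A k t"
      thus "small_ramsey_degree ObD hom cmp A \<le> enat t" by (rule dir2[OF A])
    qed
  qed
  have part2: "small_ramsey_degree ObD hom cmp A \<le> big_ramsey_degree hom cmp T A S" if A: "A \<in> ObD" for A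
  proof (cases "\<exists>n>0. \<forall>k\<ge>2. borel_arrow hom cmp T S S A k n")
    case False thus ?thesis unfolding big_ramsey_degree_def if_not_P[OF False] by simp
  next
    case True
    have AO: "A \<in> Ob" using A sub by blast
    define N where "N = (LEAST n. n > 0 \<and> (\<forall>k\<ge>2. borel_arrow hom cmp T S S A k n))"
    have NN: "N > 0 \<and> (\<forall>k\<ge>2. borel_arrow hom cmp T S S A k N)"
      unfolding N_def by (rule LeastI_ex[OF True])
    have N: "N > 0" "\<forall>k\<ge>2. borel_arrow hom cmp T S S A k N" using NN by blast+
    have big: "big_ramsey_degree hom cmp T A S = enat N"
      by (simp only: big_ramsey_degree_def if_P[OF True] N_def)
    have "\<forall>k::nat. \<forall>B\<in>ObD. hom A B \<noteq> {} \<longrightarrow> borel_arrow hom cmp T S B A k N"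
    proof (intro allI ballI impI)
      fix k :: nat and B assume B: "B \<in> ObD" and ne: "hom A B \<noteq> {}"
      obtain b where b: "b \<in> hom B S" using c.univD[OF B] by blast
      show "borel_arrow hom cmp T S B A k N" unfolding borel_arrow_def
      proof (intro allI impI)
        fix col assume bc: "borel_coloring (T A S) k col"
        hence cr: "col ` hom A S \<subseteq> {..<k}" unfolding borel_coloring_def c.topsp[OF AO SO] by (rule conjunct1)
        show "\<exists>w\<in>hom B S. card (col ` (\<lambda>f. cmp w f) ` hom A B) \<le> N"
        proof (cases "k \<ge> 2")
          case True
          hence "borel_arrow hom cmp T S S A k N" using N(2) by blast
          then obtain w where w: "w \<in> hom S S" and cw: "card (col ` (\<lambda>f. cmp w f) ` hom A S) \<le> N"
            using bc unfolding borel_arrow_def by blast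
          have sub1: "col ` (\<lambda>f. cmp (cmp w b) f) ` hom A B \<subseteq> col ` (\<lambda>f. cmp w f) ` hom A S"
          proof
            fix i assume "i \<in> col ` (\<lambda>f. cmp (cmp w b) f) ` hom A B"
            then obtain f where f: "f \<in> hom A B" "i = col (cmp (cmp w b) f)" by blast
            hence "i = col (cmp w (cmp b f))" using c.assoc[OF f(1) b w] by simp
            thus "i \<in> col ` (\<lambda>f. cmp w f) ` hom A S" using c.comp[OF f(1) b] by blast
          qed
          have "col ` (\<lambda>f. cmp w f) ` hom A S \<subseteq> {..<k}" using cr c.comp[OF _ w] by blast
          hence fS: "finite (col ` (\<lambda>f. cmp w f) ` hom A S)" using finite_subset by blast
          have "card (col ` (\<lambda>f. cmp (cmp w b) f) ` hom A B) \<le> N" using card_mono[OF fS sub1] cw by linarith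
          thus ?thesis using c.comp[OF b w] by blast
        next
          case False
          have "col ` (\<lambda>f. cmp b f) ` hom A B \<subseteq> {..<k}" using cr c.comp[OF _ b] by blast
          hence "card (col ` (\<lambda>f. cmp b f) ` hom A B) \<le> k"
            using card_mono[OF finite_lessThan] card_lessThan by metis
          hence "card (col ` (\<lambda>f. cmp b f) ` hom A B) \<le> N" using False N(1) by linarith
          thus ?thesis using b by blast
        qed
      qed
    qed
    thus ?thesis using dir2[OF A] big by simp
  qed
  show ?thesis by (rule conjI[OF part1]) (blast intro: part2)
qed

end
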